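(* Let $X$ be a shift space, $Y$ an irreducible shift space, and $\phi : X \to Y$ a code. Then any two of the following conditions imply the third: (1) $\phi$ is open; (2) $\phi$ is constant-to-one; (3) $\phi$ is bi-closing.
   Context: Shift spaces are closed shift-invariant subsets of $\mathcal{A}^{\mathbb{Z}}$ ($\mathcal{A}$ finite); a code is a continuous shift-commuting map. $Y$ is irreducible if for all words $u,v$ occurring in $Y$ there is a word $w$ with $uwv$ occurring in $Y$. Open: images of open sets are open. Constant-to-one: every fiber $\phi^{-1}(y)$ is finite and $|\phi^{-1}(y)|$ does not depend on $y\in Y$. With metric $d(x,\bar x)=2^{-k}$, $k$ maximal with $x_{[-k,k]}=\bar x_{[-k,k]}$, points are left (resp. right) asymptotic if $d(\sigma^{-n}x,\sigma^{-n}\bar x)\to0$ (resp. $d(\sigma^{n}x,\sigma^{n}\bar x)\to0$). $\phi$ is right closing if it never identifies two distinct left asymptotic points, left closing if it never identifies two distinct right asymptotic points, bi-closing if both. *)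

theory Defs
  imports Main
begin

text \<open>Points of the full shift over a finite alphabet 'a are maps int => 'a.
  Two points are within distance 2^(-k) (metric of the paper) iff they agree on [-k,k].\<close>

definition agree :: "nat \<Rightarrow> (int \<Rightarrow> 'a) \<Rightarrow> (int \<Rightarrow> 'a) \<Rightarrow> bool" where
  "agree k x y \<longleftrightarrow> (\<forall>i. - int k \<le> i \<and> i \<le> int k \<longrightarrow> x i = y i)"

definition shiftn :: "int \<Rightarrow> (int \<Rightarrow> 'a) \<Rightarrow> (int \<Rightarrow> 'a)" where
  "shiftn n x = (\<lambda>i. x (i + n))"

abbreviation shift :: "(int \<Rightarrow> 'a) \<Rightarrow> (int \<Rightarrow> 'a)" where
  "shift \<equiv> shiftn 1"

definition shift_closed :: "(int \<Rightarrow> 'a) set \<Rightarrow> bool" where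
  "shift_closed X \<longleftrightarrow> (\<forall>x. (\<forall>k. \<exists>x'\<in>X. agree k x x') \<longrightarrow> x \<in> X)"

definition shift_space :: "(int \<Rightarrow> 'a::finite) set \<Rightarrow> bool" where
  "shift_space X \<longleftrightarrow> shift_closed X \<and> shift ` X = X"

definition occurs :: "'a list \<Rightarrow> (int \<Rightarrow> 'a) set \<Rightarrow> bool" where
  "occurs w Y \<longleftrightarrow> (\<exists>y\<in>Y. \<exists>i. \<forall>j<length w. y (i + int j) = w ! j)"

definition irreducible_shift :: "(int \<Rightarrow> 'a) set \<Rightarrow> bool" where
  "irreducible_shift Y \<longleftrightarrow>
     (\<forall>u v. occurs u Y \<and> occurs v Y \<longrightarrow> (\<exists>w. occurs (u @ w @ v) Y))"

definition shift_open_in :: "(int \<Rightarrow> 'a) set \<Rightarrow> (int \<Rightarrow> 'a) set \<Rightarrow> bool" where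
  "shift_open_in X U \<longleftrightarrow> U \<subseteq> X \<and> (\<forall>x\<in>U. \<exists>k. \<forall>x'\<in>X. agree k x x' \<longrightarrow> x' \<in> U)"

definition shift_continuous_on :: "(int \<Rightarrow> 'a) set \<Rightarrow> ((int \<Rightarrow> 'a) \<Rightarrow> (int \<Rightarrow> 'b)) \<Rightarrow> bool" where
  "shift_continuous_on X \<phi> \<longleftrightarrow>
     (\<forall>x\<in>X. \<forall>k. \<exists>m. \<forall>x'\<in>X. agree m x x' \<longrightarrow> agree k (\<phi> x) (\<phi> x'))"

definition is_code ::
  "(int \<Rightarrow> 'a) set \<Rightarrow> (int \<Rightarrow> 'b) set \<Rightarrow> ((int \<Rightarrow> 'a) \<Rightarrow> (int \<Rightarrow> 'b)) \<Rightarrow> bool" where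
  "is_code X Y \<phi> \<longleftrightarrow> \<phi> ` X \<subseteq> Y \<and> shift_continuous_on X \<phi> \<and>
     (\<forall>x\<in>X. \<phi> (shift x) = shift (\<phi> x))"

definition open_code ::
  "(int \<Rightarrow> 'a) set \<Rightarrow> (int \<Rightarrow> 'b) set \<Rightarrow> ((int \<Rightarrow> 'a) \<Rightarrow> (int \<Rightarrow> 'b)) \<Rightarrow> bool" where
  "open_code X Y \<phi> \<longleftrightarrow> (\<forall>U. shift_open_in X U \<longrightarrow> shift_open_in Y (\<phi> ` U))"

definition constant_to_one ::
  "(int \<Rightarrow> 'a) set \<Rightarrow> (int \<Rightarrow> 'b) set \<Rightarrow> ((int \<Rightarrow> 'a) \<Rightarrow> (int \<Rightarrow> 'b)) \<Rightarrow> bool" where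
  "constant_to_one X Y \<phi> \<longleftrightarrow>
     (\<exists>n. \<forall>y\<in>Y. finite {x\<in>X. \<phi> x = y} \<and> card {x\<in>X. \<phi> x = y} = n)"

definition left_asymptotic :: "(int \<Rightarrow> 'a) \<Rightarrow> (int \<Rightarrow> 'a) \<Rightarrow> bool" where
  "left_asymptotic x x' \<longleftrightarrow>
     (\<forall>k. \<exists>N. \<forall>n\<ge>N. agree k (shiftn (- int n) x) (shiftn (- int n) x'))"

definition right_asymptotic :: "(int \<Rightarrow> 'a) \<Rightarrow> (int \<Rightarrow> 'a) \<Rightarrow> bool" where
  "right_asymptotic x x' \<longleftrightarrow>
     (\<forall>k. \<exists>N. \<forall>n\<ge>N. agree k (shiftn (int n) x) (shiftn (int n) x'))"

definition right_closing ::
  "(int \<Rightarrow> 'a) set \<Rightarrow> ((int \<Rightarrow> 'a) \<Rightarrow> (int \<Rightarrow> 'b)) \<Rightarrow> bool" where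
  "right_closing X \<phi> \<longleftrightarrow>
     (\<forall>x\<in>X. \<forall>x'\<in>X. x \<noteq> x' \<and> left_asymptotic x x' \<longrightarrow> \<phi> x \<noteq> \<phi> x')"

definition left_closing ::
  "(int \<Rightarrow> 'a) set \<Rightarrow> ((int \<Rightarrow> 'a) \<Rightarrow> (int \<Rightarrow> 'b)) \<Rightarrow> bool" where
  "left_closing X \<phi> \<longleftrightarrow>
     (\<forall>x\<in>X. \<forall>x'\<in>X. x \<noteq> x' \<and> right_asymptotic x x' \<longrightarrow> \<phi> x \<noteq> \<phi> x')"

definition bi_closing ::
  "(int \<Rightarrow> 'a) set \<Rightarrow> ((int \<Rightarrow> 'a) \<Rightarrow> (int \<Rightarrow> 'b)) \<Rightarrow> bool" where
  "bi_closing X \<phi> \<longleftrightarrow> right_closing X \<phi> \<and> left_closing X \<phi>"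

end

theory Submission
  imports Defs "HOL-Library.FuncSet" "HOL-Library.Infinite_Set"
begin


definition trunc :: "nat \<Rightarrow> (int \<Rightarrow> 'c) \<Rightarrow> int \<Rightarrow> 'c" where
  "trunc k x = (\<lambda>i. if - int k \<le> i \<and> i \<le> int k then x i else undefined)"

lemma agree_trunc: "agree k x y \<longleftrightarrow> trunc k x = trunc k y"
  unfolding agree_def trunc_def fun_eq_iff by auto

lemma agree_refl[simp]: "agree k x x" by (simp add: agree_def)
lemma agree_sym: "agree k x y \<Longrightarrow> agree k y x" by (simp add: agree_def)
lemma agree_trans: "agree k x y \<Longrightarrow> agree k y z \<Longrightarrow> agree k x z" by (simp add: agree_def)
lemma agree_mono: "agree k x y \<Longrightarrow> j \<le> k \<Longrightarrow> agree j x y" by (auto simp: agree_def)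
lemma agree_at: "agree k x y \<Longrightarrow> \<bar>i\<bar> \<le> int k \<Longrightarrow> x i = y i" unfolding agree_def by (metis abs_le_iff minus_le_iff)

lemma finite_trunc: "finite (range (trunc k :: (int \<Rightarrow> 'c::finite) \<Rightarrow> _))"
proof -
  have "range (trunc k :: (int \<Rightarrow> 'c::finite) \<Rightarrow> _) \<subseteq> PiE {-int k..int k} (\<lambda>_. UNIV)"
    by (auto simp: trunc_def PiE_def extensional_def)
  moreover have "finite (PiE {-int k..int k} (\<lambda>_. (UNIV::'c set)))"
    by (rule finite_PiE) auto
  ultimately show ?thesis by (rule finite_subset)
qed

lemma finite_trunc_img: "finite (trunc k ` (S :: (int \<Rightarrow> 'c::finite) set))"
  by (rule finite_subset[OF _ finite_trunc]) auto

lemma inj_on_trunc_mono: "inj_on (trunc K) F \<Longrightarrow> K \<le> K' \<Longrightarrow> inj_on (trunc K') F"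
  unfolding inj_on_def by (metis agree_mono agree_trunc)

fun idx :: "(nat \<Rightarrow> int \<Rightarrow> 'c) \<Rightarrow> nat \<Rightarrow> nat" where
  "idx s 0 = (SOME n0. infinite {n. trunc 0 (s n) = trunc 0 (s n0)})"
| "idx s (Suc k) = (SOME n0. trunc k (s n0) = trunc k (s (idx s k)) \<and>
       infinite {n. trunc (Suc k) (s n) = trunc (Suc k) (s n0)})"

lemma idx_step:
  fixes s :: "nat \<Rightarrow> int \<Rightarrow> 'c::finite"
  assumes "infinite {n. trunc k (s n) = trunc k (s (idx s k))}"
  shows "\<exists>n0. trunc k (s n0) = trunc k (s (idx s k)) \<and>
       infinite {n. trunc (Suc k) (s n) = trunc (Suc k) (s n0)}"
proof -
  let ?A = "{n. trunc k (s n) = trunc k (s (idx s k))}"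
  have "finite ((trunc (Suc k) \<circ> s) ` ?A)"
    by (rule finite_subset[OF _ finite_trunc[of "Suc k"]]) auto
  from pigeonhole_infinite[OF assms this] obtain n0 where n0: "n0 \<in> ?A"
    and inf: "infinite {a\<in>?A. (trunc (Suc k) \<circ> s) a = (trunc (Suc k) \<circ> s) n0}" by blast
  have "infinite {n. trunc (Suc k) (s n) = trunc (Suc k) (s n0)}"
    using inf by (rule infinite_super[rotated]) auto
  with n0 show ?thesis by blast
qed

lemma idx_inf:
  fixes s :: "nat \<Rightarrow> int \<Rightarrow> 'c::finite"
  shows "infinite {n. trunc k (s n) = trunc k (s (idx s k))}"
proof (induction k)
  case 0
  have "finite ((trunc 0 \<circ> s) ` UNIV)"
    by (rule finite_subset[OF _ finite_trunc[of 0]]) auto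
  from pigeonhole_infinite[OF infinite_UNIV_nat this] obtain n0 where
    "infinite {a\<in>UNIV. (trunc 0 \<circ> s) a = (trunc 0 \<circ> s) n0}" by blast
  then have "\<exists>n0. infinite {n. trunc 0 (s n) = trunc 0 (s n0)}" by auto
  from someI_ex[OF this] show ?case by simp
next
  case (Suc k)
  from someI_ex[OF idx_step[OF Suc]] show ?case by simp
qed

lemma idx_chain:
  fixes s :: "nat \<Rightarrow> int \<Rightarrow> 'c::finite"
  shows "agree k (s (idx s (Suc k))) (s (idx s k))"
  using someI_ex[OF idx_step[OF idx_inf[of k s]]] by (simp add: agree_trunc)

lemma idx_chain2:
  fixes s :: "nat \<Rightarrow> int \<Rightarrow> 'c::finite"
  shows "k \<le> j \<Longrightarrow> agree k (s (idx s j)) (s (idx s k))"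
proof (induction j rule: dec_induct)
  case base then show ?case by simp
next
  case (step j)
  have "agree k (s (idx s (Suc j))) (s (idx s j))"
    using idx_chain[of j s] step(1) by (rule agree_mono)
  then show ?case using step(3) by (rule agree_trans)
qed

lemma cluster:
  fixes s :: "nat \<Rightarrow> int \<Rightarrow> 'c::finite"
  shows "\<exists>z. \<forall>k M. \<exists>n\<ge>M. agree k (s n) z"
proof -
  define z where "z = (\<lambda>i. s (idx s (nat \<bar>i\<bar>)) i)"
  have zk: "agree k (s (idx s k)) z" for k
    unfolding agree_def
  proof (intro allI impI)
    fix i assume i: "- int k \<le> i \<and> i \<le> int k"
    then have "nat \<bar>i\<bar> \<le> k" by auto
    from idx_chain2[OF this, of s] have "agree (nat \<bar>i\<bar>) (s (idx s k)) (s (idx s (nat \<bar>i\<bar>)))" .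
    then show "s (idx s k) i = z i" unfolding z_def by (rule agree_at) simp
  qed
  have "\<exists>n\<ge>M. agree k (s n) z" for k M
  proof -
    from idx_inf[of k s] obtain n where "n \<ge> M" "trunc k (s n) = trunc k (s (idx s k))"
      unfolding infinite_nat_iff_unbounded_le by blast
    then show ?thesis using zk[of k] by (metis agree_trans agree_trunc)
  qed
  then show ?thesis by blast
qed



lemma shiftn_add[simp]: "shiftn a (shiftn b x) = shiftn (a + b) x"
  by (simp add: shiftn_def fun_eq_iff ac_simps)
lemma shiftn_0[simp]: "shiftn 0 x = x" by (simp add: shiftn_def)
lemma shiftn_inj: "shiftn j x = shiftn j y \<Longrightarrow> x = y"
  by (metis add.right_inverse shiftn_0 shiftn_add)

lemma agree_all: "(\<And>k. agree k x y) \<Longrightarrow> x = y"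
proof (rule ext)
  fix i assume "\<And>k. agree k x y"
  from agree_at[OF this[of "nat \<bar>i\<bar>"]] show "x i = y i" by simp
qed

lemma shift_in_gen_nat: assumes SZ: "shift_space Z" shows "x \<in> Z \<Longrightarrow> shiftn (int n) x \<in> Z \<and> shiftn (- int n) x \<in> Z"
proof (induction n arbitrary: x)
  case 0 then show ?case by simp
next
  case (Suc n)
  have s1: "shiftn 1 x \<in> Z" using Suc.prems SZ unfolding shift_space_def by blast
  obtain x' where x': "x' \<in> Z" "x = shiftn 1 x'" using Suc.prems SZ unfolding shift_space_def by blast
  have "shiftn (int n) (shiftn 1 x) \<in> Z" using Suc.IH[OF s1] by blast
  moreover have "shiftn (- int n) x' \<in> Z" using Suc.IH[OF x'(1)] by blast
  ultimately show ?case using x' by (simp add: add.commute)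
qed

lemma shift_in_gen: assumes SZ: "shift_space Z" shows "x \<in> Z \<Longrightarrow> shiftn j x \<in> Z"
  using shift_in_gen_nat[OF SZ, of x "nat \<bar>j\<bar>"] by (cases "j \<ge> 0") auto

definition sepN :: "(int \<Rightarrow> 'a) set \<Rightarrow> ((int \<Rightarrow> 'a) \<Rightarrow> (int \<Rightarrow> 'b)) \<Rightarrow> nat \<Rightarrow> bool" where
  "sepN X \<phi> N \<longleftrightarrow> (\<forall>x\<in>X. \<forall>x'\<in>X. \<phi> x = \<phi> x' \<and> agree N x x' \<longrightarrow> x = x')"

context
  fixes X :: "(int \<Rightarrow> 'a::finite) set" and Y :: "(int \<Rightarrow> 'b::finite) set"
    and \<phi> :: "(int \<Rightarrow> 'a) \<Rightarrow> (int \<Rightarrow> 'b)"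
  assumes SX: "shift_space X" and SY: "shift_space Y" and CD: "is_code X Y \<phi>"
begin

lemma closedX: "(\<And>k. \<exists>x'\<in>X. agree k z x') \<Longrightarrow> z \<in> X"
  using SX unfolding shift_space_def shift_closed_def by blast

lemma phiY: "x \<in> X \<Longrightarrow> \<phi> x \<in> Y"
  using CD unfolding is_code_def by blast

lemma cont: "x \<in> X \<Longrightarrow> \<exists>m. \<forall>x'\<in>X. agree m x x' \<longrightarrow> agree k (\<phi> x) (\<phi> x')"
  using CD unfolding is_code_def shift_continuous_on_def by blast

lemma shift_in: "x \<in> X \<Longrightarrow> shiftn j x \<in> X"
  by (rule shift_in_gen[OF SX])

lemma phi_shift_nat: "x \<in> X \<Longrightarrow> \<phi> (shiftn (int n) x) = shiftn (int n) (\<phi> x)"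
proof (induction n)
  case 0 then show ?case by simp
next
  case (Suc n)
  have "\<phi> (shiftn (int (Suc n)) x) = \<phi> (shiftn 1 (shiftn (int n) x))" by (simp add: add.commute)
  also have "\<dots> = shiftn 1 (\<phi> (shiftn (int n) x))"
    using CD shift_in[OF Suc.prems] unfolding is_code_def by blast
  also have "\<dots> = shiftn (int (Suc n)) (\<phi> x)" using Suc by (simp add: add.commute)
  finally show ?case .
qed

lemma phi_shift: "x \<in> X \<Longrightarrow> \<phi> (shiftn j x) = shiftn j (\<phi> x)"
proof (cases "j \<ge> 0")
  case True
  assume "x \<in> X"
  then show ?thesis using phi_shift_nat[of x "nat j"] True by simp
next
  case False
  assume x: "x \<in> X"
  let ?x' = "shiftn j x"
  have ij: "int (nat (-j)) = -j" using False by simp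
  have h: "\<phi> (shiftn (int (nat (-j))) ?x') = shiftn (int (nat (-j))) (\<phi> ?x')"
    by (rule phi_shift_nat[OF shift_in[OF x]])
  then have "\<phi> x = shiftn (-j) (\<phi> ?x')" unfolding ij by simp
  then have "shiftn j (\<phi> x) = shiftn j (shiftn (-j) (\<phi> ?x'))" by simp
  then show ?thesis by simp
qed

lemma phi_eq_lim:
  assumes "z \<in> X" "z' \<in> X"
    and cl: "\<And>m. \<exists>n. agree m (f n) z \<and> agree m (g n) z'"
    and fgX: "\<And>n. f n \<in> X \<and> g n \<in> X"
    and eq: "\<And>n. \<phi> (f n) = \<phi> (g n)"
  shows "\<phi> z = \<phi> z'"
proof (rule agree_all)
  fix k
  obtain m1 where m1: "\<forall>x'\<in>X. agree m1 z x' \<longrightarrow> agree k (\<phi> z) (\<phi> x')" using cont[OF assms(1)] by blast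
  obtain m2 where m2: "\<forall>x'\<in>X. agree m2 z' x' \<longrightarrow> agree k (\<phi> z') (\<phi> x')" using cont[OF assms(2)] by blast
  obtain n where n: "agree (max m1 m2) (f n) z" "agree (max m1 m2) (g n) z'" using cl by blast
  have "agree k (\<phi> z) (\<phi> (f n))" using m1 fgX n(1) by (meson agree_mono agree_sym max.cobounded1)
  moreover have "agree k (\<phi> z') (\<phi> (g n))" using m2 fgX n(2) by (meson agree_mono agree_sym max.cobounded2)
  ultimately show "agree k (\<phi> z) (\<phi> z')" using eq by (metis agree_sym agree_trans)
qed

lemma pair_cluster:
  fixes f g :: "nat \<Rightarrow> int \<Rightarrow> 'a"
  shows "\<exists>z z'. \<forall>k M. \<exists>n\<ge>M. agree k (f n) z \<and> agree k (g n) z'"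
proof -
  obtain w where w: "\<forall>k M. \<exists>n\<ge>M. agree k (\<lambda>i. (f n i, g n i)) w"
    using cluster[of "\<lambda>n i. (f n i, g n i)"] by blast
  have "\<forall>k M. \<exists>n\<ge>M. agree k (f n) (fst \<circ> w) \<and> agree k (g n) (snd \<circ> w)"
  proof (intro allI)
    fix k M
    from w obtain n where "n \<ge> M" "agree k (\<lambda>i. (f n i, g n i)) w" by blast
    then show "\<exists>n\<ge>M. agree k (f n) (fst \<circ> w) \<and> agree k (g n) (snd \<circ> w)"
      by (intro exI[of _ n]) (auto simp: agree_def, metis fst_conv, metis snd_conv)
  qed
  then show ?thesis by blast
qed

lemma right_unif:
  assumes "right_closing X \<phi>"
  shows "\<exists>N. \<forall>x\<in>X. \<forall>x'\<in>X. \<phi> x = \<phi> x' \<and> (\<forall>i. - int N \<le> i \<and> i \<le> -1 \<longrightarrow> x i = x' i) \<longrightarrow> x 0 = x' 0"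
proof (rule ccontr)
  assume "\<not> ?thesis"
  then have "\<forall>N. \<exists>x x'. x\<in>X \<and> x'\<in>X \<and> \<phi> x = \<phi> x' \<and> (\<forall>i. - int N \<le> i \<and> i \<le> -1 \<longrightarrow> x i = x' i) \<and> x 0 \<noteq> x' 0"
    by blast
  then obtain f g where fg: "\<And>N. f N \<in> X \<and> g N \<in> X \<and> \<phi> (f N) = \<phi> (g N) \<and>
     (\<forall>i. - int N \<le> i \<and> i \<le> -1 \<longrightarrow> f N i = g N i) \<and> f N 0 \<noteq> g N 0" by metis
  obtain z z' where cl: "\<forall>k M. \<exists>n\<ge>M. agree k (f n) z \<and> agree k (g n) z'"
    using pair_cluster by blast
  have zX: "z \<in> X" by (rule closedX) (metis cl fg agree_sym)
  have zX': "z' \<in> X" by (rule closedX) (metis cl fg agree_sym)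
  have eq: "\<phi> z = \<phi> z'" by (rule phi_eq_lim[OF zX zX', of f g]) (use cl fg in blast)+
  have neq: "z 0 \<noteq> z' 0"
  proof -
    obtain n where "agree 0 (f n) z" "agree 0 (g n) z'" using cl by blast
    then show ?thesis using fg[of n] agree_at[of 0 "f n" z 0] agree_at[of 0 "g n" z' 0] by auto
  qed
  have neg: "z i = z' i" if "i < 0" for i
  proof -
    obtain n where n: "n \<ge> nat (-i)" "agree (nat (-i)) (f n) z" "agree (nat (-i)) (g n) z'" using cl by blast
    have "f n i = g n i" using fg[of n] n(1) that by auto
    moreover have "f n i = z i" "g n i = z' i" using n that by (auto intro!: agree_at)
    ultimately show ?thesis by simp
  qed
  have "left_asymptotic z z'"
    unfolding left_asymptotic_def
  proof
    fix k
    show "\<exists>N. \<forall>n\<ge>N. agree k (shiftn (- int n) z) (shiftn (- int n) z')"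
      by (rule exI[of _ "Suc k"]) (auto simp: agree_def shiftn_def intro!: neg)
  qed
  moreover have "z \<noteq> z'" using neq by auto
  ultimately show False using assms zX zX' eq unfolding right_closing_def by blast
qed

lemma left_unif:
  assumes "left_closing X \<phi>"
  shows "\<exists>N. \<forall>x\<in>X. \<forall>x'\<in>X. \<phi> x = \<phi> x' \<and> (\<forall>i. 1 \<le> i \<and> i \<le> int N \<longrightarrow> x i = x' i) \<longrightarrow> x 0 = x' 0"
proof (rule ccontr)
  assume "\<not> ?thesis"
  then have "\<forall>N. \<exists>x x'. x\<in>X \<and> x'\<in>X \<and> \<phi> x = \<phi> x' \<and> (\<forall>i. 1 \<le> i \<and> i \<le> int N \<longrightarrow> x i = x' i) \<and> x 0 \<noteq> x' 0"
    by blast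
  then obtain f g where fg: "\<And>N. f N \<in> X \<and> g N \<in> X \<and> \<phi> (f N) = \<phi> (g N) \<and>
     (\<forall>i. 1 \<le> i \<and> i \<le> int N \<longrightarrow> f N i = g N i) \<and> f N 0 \<noteq> g N 0" by metis
  obtain z z' where cl: "\<forall>k M. \<exists>n\<ge>M. agree k (f n) z \<and> agree k (g n) z'"
    using pair_cluster by blast
  have zX: "z \<in> X" by (rule closedX) (metis cl fg agree_sym)
  have zX': "z' \<in> X" by (rule closedX) (metis cl fg agree_sym)
  have eq: "\<phi> z = \<phi> z'" by (rule phi_eq_lim[OF zX zX', of f g]) (use cl fg in blast)+
  have neq: "z 0 \<noteq> z' 0"
  proof -
    obtain n where "agree 0 (f n) z" "agree 0 (g n) z'" using cl by blast
    then show ?thesis using fg[of n] agree_at[of 0 "f n" z 0] agree_at[of 0 "g n" z' 0] by auto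
  qed
  have pos: "z i = z' i" if "i > 0" for i
  proof -
    obtain n where n: "n \<ge> nat i" "agree (nat i) (f n) z" "agree (nat i) (g n) z'" using cl by blast
    have "f n i = g n i" using fg[of n] n(1) that by auto
    moreover have "f n i = z i" "g n i = z' i" using n that by (auto intro!: agree_at)
    ultimately show ?thesis by simp
  qed
  have "right_asymptotic z z'"
    unfolding right_asymptotic_def
  proof
    fix k
    show "\<exists>N. \<forall>n\<ge>N. agree k (shiftn (int n) z) (shiftn (int n) z')"
      by (rule exI[of _ "Suc k"]) (auto simp: agree_def shiftn_def intro!: pos)
  qed
  moreover have "z \<noteq> z'" using neq by auto
  ultimately show False using assms zX zX' eq unfolding left_closing_def by blast
qed


lemma bi_sep:
  assumes "bi_closing X \<phi>"
  shows "\<exists>N. sepN X \<phi> N"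
proof -
  obtain NR where NR: "\<forall>x\<in>X. \<forall>x'\<in>X. \<phi> x = \<phi> x' \<and> (\<forall>i. - int NR \<le> i \<and> i \<le> -1 \<longrightarrow> x i = x' i) \<longrightarrow> x 0 = x' 0"
    using right_unif assms unfolding bi_closing_def by blast
  obtain NL where NL: "\<forall>x\<in>X. \<forall>x'\<in>X. \<phi> x = \<phi> x' \<and> (\<forall>i. 1 \<le> i \<and> i \<le> int NL \<longrightarrow> x i = x' i) \<longrightarrow> x 0 = x' 0"
    using left_unif assms unfolding bi_closing_def by blast
  define N where "N = max NR NL"
  have "sepN X \<phi> N" unfolding sepN_def
  proof (intro ballI impI)
    fix x x' assume x: "x \<in> X" and x': "x' \<in> X" and h: "\<phi> x = \<phi> x' \<and> agree N x x'"
    have eqs: "\<phi> (shiftn j x) = \<phi> (shiftn j x')" for j using h phi_shift x x' by simp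
    have pos: "\<forall>i. - int N \<le> i \<and> i \<le> int N + int m \<longrightarrow> x i = x' i" for m
    proof (induction m)
      case 0 then show ?case using h unfolding agree_def by simp
    next
      case (Suc m)
      define c where "c = int N + int m + 1"
      have "shiftn c x 0 = shiftn c x' 0"
      proof (rule NR[rule_format])
        show "shiftn c x \<in> X" "shiftn c x' \<in> X" using x x' shift_in by auto
        show "\<phi> (shiftn c x) = \<phi> (shiftn c x') \<and> (\<forall>i. - int NR \<le> i \<and> i \<le> -1 \<longrightarrow> shiftn c x i = shiftn c x' i)"
        proof
          show "\<phi> (shiftn c x) = \<phi> (shiftn c x')" by (rule eqs)
          show "\<forall>i. - int NR \<le> i \<and> i \<le> -1 \<longrightarrow> shiftn c x i = shiftn c x' i"
          proof (intro allI impI)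
            fix i assume i: "- int NR \<le> i \<and> i \<le> -1"
            have "NR \<le> N" unfolding N_def by simp
            then have "- int N \<le> i + c \<and> i + c \<le> int N + int m" using i unfolding c_def by linarith
            then show "shiftn c x i = shiftn c x' i" using Suc.IH unfolding shiftn_def by blast
          qed
        qed
      qed
      then have "x c = x' c" by (simp add: shiftn_def)
      show ?case
      proof (intro allI impI)
        fix i assume i: "- int N \<le> i \<and> i \<le> int N + int (Suc m)"
        show "x i = x' i"
        proof (cases "i = c")
          case True then show ?thesis using \<open>x c = x' c\<close> by simp
        next
          case False
          then have "- int N \<le> i \<and> i \<le> int N + int m" using i unfolding c_def by linarith
          then show ?thesis using Suc.IH by blast
        qed
      qed
    qed
    have neg: "\<forall>i. - int N - int m \<le> i \<and> i \<le> int N \<longrightarrow> x i = x' i" for m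
    proof (induction m)
      case 0 then show ?case using h unfolding agree_def by simp
    next
      case (Suc m)
      define c where "c = - int N - int m - 1"
      have "shiftn c x 0 = shiftn c x' 0"
      proof (rule NL[rule_format])
        show "shiftn c x \<in> X" "shiftn c x' \<in> X" using x x' shift_in by auto
        show "\<phi> (shiftn c x) = \<phi> (shiftn c x') \<and> (\<forall>i. 1 \<le> i \<and> i \<le> int NL \<longrightarrow> shiftn c x i = shiftn c x' i)"
        proof
          show "\<phi> (shiftn c x) = \<phi> (shiftn c x')" by (rule eqs)
          show "\<forall>i. 1 \<le> i \<and> i \<le> int NL \<longrightarrow> shiftn c x i = shiftn c x' i"
          proof (intro allI impI)
            fix i assume i: "1 \<le> i \<and> i \<le> int NL"
            have "NL \<le> N" unfolding N_def by simp
            then have "- int N - int m \<le> i + c \<and> i + c \<le> int N" using i unfolding c_def by linarith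
            then show "shiftn c x i = shiftn c x' i" using Suc.IH unfolding shiftn_def by blast
          qed
        qed
      qed
      then have "x c = x' c" by (simp add: shiftn_def)
      show ?case
      proof (intro allI impI)
        fix i assume i: "- int N - int (Suc m) \<le> i \<and> i \<le> int N"
        show "x i = x' i"
        proof (cases "i = c")
          case True then show ?thesis using \<open>x c = x' c\<close> by simp
        next
          case False
          then have "- int N - int m \<le> i \<and> i \<le> int N" using i unfolding c_def by linarith
          then show ?thesis using Suc.IH by blast
        qed
      qed
    qed
    show "x = x'"
    proof
      fix i
      show "x i = x' i"
      proof (cases "i \<ge> 0")
        case True then show ?thesis using pos[of "nat i"] by simp
      next
        case False then show ?thesis using neg[of "nat (-i)"] by simp
      qed
    qed
  qed
  then show ?thesis by blast
qed

lemma sep_bi: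
  assumes "sepN X \<phi> N"
  shows "bi_closing X \<phi>"
  unfolding bi_closing_def right_closing_def left_closing_def
proof (intro conjI ballI impI)
  fix x x' assume x: "x \<in> X" and x': "x' \<in> X" and h: "x \<noteq> x' \<and> left_asymptotic x x'"
  obtain n0 where n0: "agree N (shiftn (- int n0) x) (shiftn (- int n0) x')"
    using h unfolding left_asymptotic_def by blast
  show "\<phi> x \<noteq> \<phi> x'"
  proof
    assume "\<phi> x = \<phi> x'"
    then have "\<phi> (shiftn (- int n0) x) = \<phi> (shiftn (- int n0) x')" using phi_shift x x' by simp
    then have "shiftn (- int n0) x = shiftn (- int n0) x'"
      using assms n0 shift_in x x' unfolding sepN_def by blast
    then show False using h shiftn_inj by blast
  qed
next
  fix x x' assume x: "x \<in> X" and x': "x' \<in> X" and h: "x \<noteq> x' \<and> right_asymptotic x x'"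
  obtain n0 where n0: "agree N (shiftn (int n0) x) (shiftn (int n0) x')"
    using h unfolding right_asymptotic_def by blast
  show "\<phi> x \<noteq> \<phi> x'"
  proof
    assume "\<phi> x = \<phi> x'"
    then have "\<phi> (shiftn (int n0) x) = \<phi> (shiftn (int n0) x')" using phi_shift x x' by simp
    then have "shiftn (int n0) x = shiftn (int n0) x'"
      using assms n0 shift_in x x' unfolding sepN_def by blast
    then show False using h shiftn_inj by blast
  qed
qed

lemma upper:
  "\<exists>M. \<forall>y'\<in>Y. agree M y y' \<longrightarrow> trunc K ` {x\<in>X. \<phi> x = y'} \<subseteq> trunc K ` {x\<in>X. \<phi> x = y}"
proof (rule ccontr)
  assume neg: "\<not> ?thesis"
  have "\<exists>x. x \<in> X \<and> agree M y (\<phi> x) \<and> trunc K x \<notin> trunc K ` {x\<in>X. \<phi> x = y}" for M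
  proof -
    from neg obtain y' where y': "y' \<in> Y" "agree M y y'"
      and ns: "\<not> trunc K ` {x\<in>X. \<phi> x = y'} \<subseteq> trunc K ` {x\<in>X. \<phi> x = y}" by blast
    from ns obtain x where "x \<in> X" "\<phi> x = y'" "trunc K x \<notin> trunc K ` {x\<in>X. \<phi> x = y}"
      by blast
    with y' show ?thesis by blast
  qed
  note ex = this
  define s where "s M = (SOME x. x \<in> X \<and> agree M y (\<phi> x) \<and> trunc K x \<notin> trunc K ` {x\<in>X. \<phi> x = y})" for M
  have s: "s M \<in> X \<and> agree M y (\<phi> (s M)) \<and> trunc K (s M) \<notin> trunc K ` {x\<in>X. \<phi> x = y}" for M
    unfolding s_def by (rule someI_ex[OF ex])
  obtain z where cl: "\<And>k M. \<exists>n\<ge>M. agree k (s n) z" using cluster[of s] by blast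
  have zX: "z \<in> X"
  proof (rule closedX)
    fix k
    obtain n where "agree k (s n) z" using cl by blast
    then have "agree k z (s n)" by (rule agree_sym)
    then show "\<exists>x'\<in>X. agree k z x'" using s[of n] by blast
  qed
  have "\<phi> z = y"
  proof (rule agree_all)
    fix k
    obtain m where m: "\<forall>x'\<in>X. agree m z x' \<longrightarrow> agree k (\<phi> z) (\<phi> x')" using cont[OF zX] by blast
    obtain n where n: "n \<ge> k" "agree m (s n) z" using cl by blast
    have sX: "s n \<in> X" using s[of n] by blast
    have "agree k (\<phi> z) (\<phi> (s n))" using m sX agree_sym[OF n(2)] by blast
    moreover have "agree k y (\<phi> (s n))" using s[of n] n(1) by (meson agree_mono)
    ultimately show "agree k (\<phi> z) y" by (meson agree_sym agree_trans)
  qed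
  moreover obtain n where "agree K (s n) z" using cl by blast
  then have "trunc K (s n) = trunc K z" by (simp add: agree_trunc)
  ultimately have "trunc K (s n) \<in> trunc K ` {x\<in>X. \<phi> x = y}" using zX by auto
  then show False using s[of n] by blast
qed

lemma lower1:
  assumes op: "open_code X Y \<phi>" and x: "x \<in> X"
  shows "\<exists>M. \<forall>y'\<in>Y. agree M (\<phi> x) y' \<longrightarrow> (\<exists>x'\<in>X. \<phi> x' = y' \<and> agree K x x')"
proof -
  let ?U = "{x'\<in>X. agree K x x'}"
  have "shift_open_in X ?U" unfolding shift_open_in_def
    by (auto intro: agree_trans)
  then have "shift_open_in Y (\<phi> ` ?U)" using op unfolding open_code_def by blast
  moreover have "\<phi> x \<in> \<phi> ` ?U" using x by auto
  ultimately obtain M where "\<forall>y'\<in>Y. agree M (\<phi> x) y' \<longrightarrow> y' \<in> \<phi> ` ?U"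
    unfolding shift_open_in_def by blast
  then show ?thesis by blast
qed

lemma lowerF:
  assumes op: "open_code X Y \<phi>" and fin: "finite F" and FX: "F \<subseteq> X"
  shows "\<exists>M. \<forall>y'\<in>Y. (\<forall>x\<in>F. agree M (\<phi> x) y') \<longrightarrow> trunc K ` F \<subseteq> trunc K ` {x\<in>X. \<phi> x = y'}"
  using fin FX
proof (induction F rule: finite_induct)
  case empty then show ?case by simp
next
  case (insert a F)
  obtain M1 where M1: "\<forall>y'\<in>Y. agree M1 (\<phi> a) y' \<longrightarrow> (\<exists>x'\<in>X. \<phi> x' = y' \<and> agree K a x')"
    using lower1[OF op] insert.prems by blast
  obtain M2 where M2: "\<forall>y'\<in>Y. (\<forall>x\<in>F. agree M2 (\<phi> x) y') \<longrightarrow> trunc K ` F \<subseteq> trunc K ` {x\<in>X. \<phi> x = y'}"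
    using insert by blast
  show ?case
  proof (rule exI[of _ "max M1 M2"], intro ballI impI)
    fix y' assume y': "y' \<in> Y" and h: "\<forall>x\<in>insert a F. agree (max M1 M2) (\<phi> x) y'"
    have "trunc K ` F \<subseteq> trunc K ` {x\<in>X. \<phi> x = y'}" using M2 y' h agree_mono by fastforce
    moreover obtain x' where "x' \<in> X" "\<phi> x' = y'" "agree K a x'" using M1 y' h agree_mono by fastforce
    ultimately show "trunc K ` insert a F \<subseteq> trunc K ` {x\<in>X. \<phi> x = y'}"
      by (auto simp: agree_trunc)
  qed
qed

lemma inj_mono: "inj_on (trunc K) F \<Longrightarrow> K \<le> K' \<Longrightarrow> inj_on (trunc K') F"
  unfolding inj_on_def by (metis agree_mono agree_trunc)

lemma sep_inj: "sepN X \<phi> N \<Longrightarrow> N \<le> K \<Longrightarrow> inj_on (trunc K) {x\<in>X. \<phi> x = y}"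
  unfolding inj_on_def sepN_def by (metis (mono_tags, lifting) agree_mono agree_trunc mem_Collect_eq)

lemma sep_fin: "sepN X \<phi> N \<Longrightarrow> finite {x\<in>X. \<phi> x = y}"
  using sep_inj[of N N y] finite_trunc_img finite_imageD by blast

lemma fib_shift: "y \<in> Y \<Longrightarrow> {x\<in>X. \<phi> x = shiftn j y} = shiftn j ` {x\<in>X. \<phi> x = y}"
proof
  show "{x\<in>X. \<phi> x = shiftn j y} \<subseteq> shiftn j ` {x\<in>X. \<phi> x = y}"
  proof
    fix x assume "x \<in> {x\<in>X. \<phi> x = shiftn j y}"
    then have x: "x \<in> X" "\<phi> x = shiftn j y" by auto
    have "shiftn (-j) x \<in> X" using x shift_in by blast
    moreover have "\<phi> (shiftn (-j) x) = y" using phi_shift[OF x(1)] x(2) by simp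
    moreover have "x = shiftn j (shiftn (-j) x)" by simp
    ultimately show "x \<in> shiftn j ` {x\<in>X. \<phi> x = y}" by blast
  qed
  show "shiftn j ` {x\<in>X. \<phi> x = y} \<subseteq> {x\<in>X. \<phi> x = shiftn j y}"
    using shift_in phi_shift by auto
qed

lemma card_fib_shift: "y \<in> Y \<Longrightarrow> card {x\<in>X. \<phi> x = shiftn j y} = card {x\<in>X. \<phi> x = y}"
  unfolding fib_shift by (rule card_image) (auto intro: inj_onI shiftn_inj)

end


lemma irr_const:
  fixes Y :: "(int \<Rightarrow> 'b::finite) set" and c :: "(int \<Rightarrow> 'b) \<Rightarrow> nat"
  assumes irr: "irreducible_shift Y" and SY: "shift_space Y"
    and inv: "\<And>y j. y \<in> Y \<Longrightarrow> c (shiftn j y) = c y"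
    and loc: "\<And>y. y \<in> Y \<Longrightarrow> \<exists>M. \<forall>y'\<in>Y. agree M y y' \<longrightarrow> c y' = c y"
    and y0: "y0 \<in> Y" and y1: "y1 \<in> Y"
  shows "c y0 = c y1"
proof -
  obtain M0 where M0: "\<forall>y'\<in>Y. agree M0 y0 y' \<longrightarrow> c y' = c y0" using loc[OF y0] by blast
  obtain M1 where M1: "\<forall>y'\<in>Y. agree M1 y1 y' \<longrightarrow> c y' = c y1" using loc[OF y1] by blast
  define u where "u = map (\<lambda>j. y0 (int j - int M0)) [0..<2*M0+1]"
  define v where "v = map (\<lambda>j. y1 (int j - int M1)) [0..<2*M1+1]"
  have "occurs u Y" unfolding occurs_def u_def
    by (rule bexI[OF _ y0], rule exI[of _ "- int M0"]) (auto simp del: upt_Suc simp: algebra_simps)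
  moreover have "occurs v Y" unfolding occurs_def v_def
    by (rule bexI[OF _ y1], rule exI[of _ "- int M1"]) (auto simp del: upt_Suc simp: algebra_simps)
  ultimately obtain w where "occurs (u @ w @ v) Y" using irr unfolding irreducible_shift_def by blast
  then obtain y i where y: "y \<in> Y" and yi: "\<And>j. j < length (u @ w @ v) \<Longrightarrow> y (i + int j) = (u @ w @ v) ! j"
    unfolding occurs_def by blast
  have a0: "agree M0 y0 (shiftn (i + int M0) y)" unfolding agree_def
  proof (intro allI impI)
    fix p assume p: "- int M0 \<le> p \<and> p \<le> int M0"
    define j where "j = nat (p + int M0)"
    have jl: "j < length u" using p unfolding j_def u_def by (auto simp del: upt_Suc)
    have "shiftn (i + int M0) y p = y (i + int j)" using p unfolding shiftn_def j_def by (simp add: algebra_simps)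
    also have "\<dots> = (u @ w @ v) ! j" using yi jl by simp
    also have "\<dots> = u ! j" using jl by (simp add: nth_append)
    also have "\<dots> = y0 p" using jl p unfolding u_def j_def by (simp del: upt_Suc)
    finally show "y0 p = shiftn (i + int M0) y p" by simp
  qed
  have a1: "agree M1 y1 (shiftn (i + int (length u) + int (length w) + int M1) y)" unfolding agree_def
  proof (intro allI impI)
    fix p assume p: "- int M1 \<le> p \<and> p \<le> int M1"
    define q where "q = nat (p + int M1)"
    define j where "j = length u + length w + q"
    have ql: "q < length v" using p unfolding q_def v_def by (auto simp del: upt_Suc)
    then have jl: "j < length (u @ w @ v)" unfolding j_def by simp
    have "shiftn (i + int (length u) + int (length w) + int M1) y p = y (i + int j)"
      using p unfolding shiftn_def j_def q_def by (simp add: algebra_simps)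
    also have "\<dots> = (u @ w @ v) ! j" using yi jl by simp
    also have "\<dots> = v ! q" unfolding j_def by (simp add: nth_append)
    also have "\<dots> = y1 p" using ql p unfolding v_def q_def by (simp del: upt_Suc)
    finally show "y1 p = shiftn (i + int (length u) + int (length w) + int M1) y p" by simp
  qed
  have "c y0 = c y" using M0 a0 shift_in_gen[OF SY y] inv[OF y] by metis
  also have "\<dots> = c y1" using M1 a1 shift_in_gen[OF SY y] inv[OF y] by metis
  finally show ?thesis .
qed

lemma finite_sep:
  fixes F :: "(int \<Rightarrow> 'c) set"
  shows "finite F \<Longrightarrow> \<exists>K. inj_on (trunc K) F"
proof (induction F rule: finite_induct)
  case empty then show ?case by simp
next
  case (insert a F)
  obtain K0 where K0: "inj_on (trunc K0) F" using insert by blast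
  define kf where "kf = (\<lambda>b. SOME k. \<not> agree k a b)"
  have kf: "b \<noteq> a \<Longrightarrow> \<not> agree (kf b) a b" for b
    unfolding kf_def by (rule someI_ex) (metis agree_all)
  define K1 where "K1 = Max (insert 0 (kf ` F))"
  have K1: "b \<in> F \<Longrightarrow> kf b \<le> K1" for b unfolding K1_def using insert by simp
  define K where "K = max K0 K1"
  have "inj_on (trunc K) F" using inj_on_trunc_mono[OF K0, of "max K0 K1"] unfolding K_def by simp
  moreover have "trunc K a \<notin> trunc K ` (F - {a})"
  proof
    assume "trunc K a \<in> trunc K ` (F - {a})"
    then obtain b where b: "b \<in> F" "b \<noteq> a" "agree K a b" by (auto simp: agree_trunc)
    then have "agree (kf b) a b" using K1[OF b(1)] unfolding K_def by (meson agree_mono max.cobounded2 order.trans)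
    then show False using kf b(2) by blast
  qed
  ultimately show ?case by (auto simp: inj_on_insert)
qed



theorem theorem4p5:
  fixes X :: "(int \<Rightarrow> 'a::finite) set" and Y :: "(int \<Rightarrow> 'b::finite) set"
    and \<phi> :: "(int \<Rightarrow> 'a) \<Rightarrow> (int \<Rightarrow> 'b)"
  assumes "shift_space X" and "shift_space Y" and "irreducible_shift Y"
    and "is_code X Y \<phi>"
  shows "(open_code X Y \<phi> \<and> constant_to_one X Y \<phi> \<longrightarrow> bi_closing X \<phi>) \<and>
         (open_code X Y \<phi> \<and> bi_closing X \<phi> \<longrightarrow> constant_to_one X Y \<phi>) \<and>
         (constant_to_one X Y \<phi> \<and> bi_closing X \<phi> \<longrightarrow> open_code X Y \<phi>)"
proof (intro conjI impI)
  note SX = assms(1) and SY = assms(2) and irr = assms(3) and CD = assms(4)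
  note closedX = closedX[OF SX SY CD] and phiY = phiY[OF SX SY CD] and cont = cont[OF SX SY CD]
    and sep_bi = sep_bi[OF SX SY CD] and bi_sep = bi_sep[OF SX SY CD]
    and upper = upper[OF SX SY CD] and lowerF = lowerF[OF SX SY CD]
    and sep_inj = sep_inj[OF SX SY CD] and sep_fin = sep_fin[OF SX SY CD]
    and card_fib_shift = card_fib_shift[OF SX SY CD]
  let ?F = "\<lambda>y. {x\<in>X. \<phi> x = y}"
  {
    assume h: "open_code X Y \<phi> \<and> constant_to_one X Y \<phi>"
    then have op: "open_code X Y \<phi>" by blast
    obtain d where d: "\<And>y. y \<in> Y \<Longrightarrow> finite (?F y) \<and> card (?F y) = d"
      using h unfolding constant_to_one_def by blast
    have "\<exists>N. sepN X \<phi> N"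
    proof (rule ccontr)
      assume neg: "\<not> (\<exists>N. sepN X \<phi> N)"
      have ex: "\<exists>p. fst p \<in> X \<and> snd p \<in> X \<and> \<phi> (fst p) = \<phi> (snd p) \<and> agree N (fst p) (snd p) \<and> fst p \<noteq> snd p" for N
      proof -
        obtain x x' where "x \<in> X" "x' \<in> X" "\<phi> x = \<phi> x'" "agree N x x'" "x \<noteq> x'"
          using neg unfolding sepN_def by blast
        then show ?thesis by (intro exI[of _ "(x, x')"]) simp
      qed
      define p where "p N = (SOME p. fst p \<in> X \<and> snd p \<in> X \<and> \<phi> (fst p) = \<phi> (snd p) \<and> agree N (fst p) (snd p) \<and> fst p \<noteq> snd p)" for N
      have p: "fst (p N) \<in> X \<and> snd (p N) \<in> X \<and> \<phi> (fst (p N)) = \<phi> (snd (p N)) \<and> agree N (fst (p N)) (snd (p N)) \<and> fst (p N) \<noteq> snd (p N)" for N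
        unfolding p_def by (rule someI_ex[OF ex])
      define f where "f N = fst (p N)" for N
      define g where "g N = snd (p N)" for N
      have fg: "f N \<in> X" "g N \<in> X" "\<phi> (f N) = \<phi> (g N)" "agree N (f N) (g N)" "f N \<noteq> g N" for N
        using p[of N] unfolding f_def g_def by auto
      obtain z where cl: "\<And>k M. \<exists>n\<ge>M. agree k (f n) z" using cluster[of f] by blast
      have zX: "z \<in> X"
      proof (rule closedX)
        fix k
        obtain n where "agree k (f n) z" using cl by blast
        then show "\<exists>x'\<in>X. agree k z x'" using fg(1)[of n] agree_sym by blast
      qed
      define y where "y = \<phi> z"
      have yY: "y \<in> Y" unfolding y_def using phiY[OF zX] .
      have finF: "finite (?F y)" using d[OF yY] by blast
      obtain K where K: "inj_on (trunc K) (?F y)" using finite_sep[OF finF] by blast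
      obtain M where M: "\<forall>y'\<in>Y. (\<forall>x\<in>?F y. agree M (\<phi> x) y') \<longrightarrow> trunc K ` ?F y \<subseteq> trunc K ` ?F y'"
        using lowerF[OF op finF, of K] by blast
      obtain m where m: "\<forall>x'\<in>X. agree m z x' \<longrightarrow> agree M (\<phi> z) (\<phi> x')" using cont[OF zX] by blast
      obtain n where n: "n \<ge> K" "agree (max m K) (f n) z" using cl by blast
      define y' where "y' = \<phi> (f n)"
      have y'Y: "y' \<in> Y" unfolding y'_def using phiY[OF fg(1)] .
      have "agree m z (f n)" using n(2) by (meson agree_mono agree_sym max.cobounded1)
      then have "agree M y y'" using m fg(1) unfolding y_def y'_def by blast
      then have sub: "trunc K ` ?F y \<subseteq> trunc K ` ?F y'" using M y'Y by auto
      have fin': "finite (?F y')" using d[OF y'Y] by blast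
      have "card (trunc K ` ?F y) = d" using card_image[OF K] d[OF yY] by simp
      moreover have "card (trunc K ` ?F y) \<le> card (trunc K ` ?F y')"
        by (rule card_mono[OF _ sub]) (use fin' in simp)
      moreover have "card (trunc K ` ?F y') \<le> card (?F y')" by (rule card_image_le[OF fin'])
      ultimately have "card (trunc K ` ?F y') = card (?F y')" using d[OF y'Y] by simp
      then have inj: "inj_on (trunc K) (?F y')" using inj_on_iff_eq_card[OF fin'] by blast
      have "f n \<in> ?F y'" "g n \<in> ?F y'" using fg[of n] unfolding y'_def by auto
      moreover have "trunc K (f n) = trunc K (g n)"
        using fg(4)[of n] n(1) by (simp add: agree_trunc[symmetric] agree_mono)
      ultimately have "f n = g n" using inj unfolding inj_on_def by blast
      then show False using fg(5) by blast
    qed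
    then show "bi_closing X \<phi>" using sep_bi by blast
  }
  {
    assume h: "open_code X Y \<phi> \<and> bi_closing X \<phi>"
    then have op: "open_code X Y \<phi>" by blast
    obtain N where N: "sepN X \<phi> N" using bi_sep h by blast
    have fin: "finite (?F y)" for y using sep_fin[OF N] .
    define c where "c y = card (?F y)" for y
    have loc: "\<exists>M. \<forall>y'\<in>Y. agree M y y' \<longrightarrow> c y' = c y" if yY: "y \<in> Y" for y
    proof -
      obtain M1 where M1: "\<forall>y'\<in>Y. agree M1 y y' \<longrightarrow> trunc N ` ?F y' \<subseteq> trunc N ` ?F y"
        using upper by blast
      obtain M2 where M2: "\<forall>y'\<in>Y. (\<forall>x\<in>?F y. agree M2 (\<phi> x) y') \<longrightarrow> trunc N ` ?F y \<subseteq> trunc N ` ?F y'"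
        using lowerF[OF op fin, of y N] by blast
      show ?thesis
      proof (rule exI[of _ "max M1 M2"], intro ballI impI)
        fix y' assume y'Y: "y' \<in> Y" and a: "agree (max M1 M2) y y'"
        have "trunc N ` ?F y' \<subseteq> trunc N ` ?F y" using M1 y'Y a by (meson agree_mono max.cobounded1)
        moreover have "trunc N ` ?F y \<subseteq> trunc N ` ?F y'"
        proof -
          have "agree M2 y y'" using a by (rule agree_mono) simp
          then have "\<forall>x\<in>?F y. agree M2 (\<phi> x) y'" by simp
          then show ?thesis using M2 y'Y by blast
        qed
        ultimately have eq: "trunc N ` ?F y' = trunc N ` ?F y" by blast
        have "c y' = card (trunc N ` ?F y')" unfolding c_def using card_image[OF sep_inj[OF N le_refl]] by simp
        also have "\<dots> = card (trunc N ` ?F y)" using eq by simp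
        also have "\<dots> = c y" unfolding c_def using card_image[OF sep_inj[OF N le_refl]] by simp
        finally show "c y' = c y" .
      qed
    qed
    have inv: "c (shiftn j y) = c y" if "y \<in> Y" for y j
      unfolding c_def using card_fib_shift[OF that] .
    show "constant_to_one X Y \<phi>"
    proof (cases "Y = {}")
      case True then show ?thesis unfolding constant_to_one_def by simp
    next
      case False
      then obtain y0 where y0: "y0 \<in> Y" by blast
      have "\<forall>y\<in>Y. finite (?F y) \<and> card (?F y) = c y0"
      proof
        fix y assume "y \<in> Y"
        then have "c y = c y0" using irr_const[OF irr SY, of c y y0] inv loc y0 by blast
        then show "finite (?F y) \<and> card (?F y) = c y0" using fin unfolding c_def by simp
      qed
      then show ?thesis unfolding constant_to_one_def by blast
    qed
  }
  {
    assume h: "constant_to_one X Y \<phi> \<and> bi_closing X \<phi>"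
    obtain d where d: "\<And>y. y \<in> Y \<Longrightarrow> finite (?F y) \<and> card (?F y) = d"
      using h unfolding constant_to_one_def by blast
    obtain N where N: "sepN X \<phi> N" using bi_sep h by blast
    show "open_code X Y \<phi>" unfolding open_code_def
    proof (intro allI impI)
      fix U assume U: "shift_open_in X U"
      show "shift_open_in Y (\<phi> ` U)" unfolding shift_open_in_def
      proof (intro conjI ballI)
        show "\<phi> ` U \<subseteq> Y" using U phiY unfolding shift_open_in_def by blast
      next
        fix y assume "y \<in> \<phi> ` U"
        then obtain x where xU: "x \<in> U" and yx: "y = \<phi> x" by blast
        have xX: "x \<in> X" using U xU unfolding shift_open_in_def by blast
        have yY: "y \<in> Y" using phiY[OF xX] yx by simp
        obtain k where k: "\<forall>x'\<in>X. agree k x x' \<longrightarrow> x' \<in> U" using U xU unfolding shift_open_in_def by blast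
        define K where "K = max k N"
        obtain M where M: "\<forall>y'\<in>Y. agree M y y' \<longrightarrow> trunc K ` ?F y' \<subseteq> trunc K ` ?F y"
          using upper by blast
        show "\<exists>M. \<forall>y'\<in>Y. agree M y y' \<longrightarrow> y' \<in> \<phi> ` U"
        proof (rule exI[of _ M], intro ballI impI)
          fix y' assume y'Y: "y' \<in> Y" and a: "agree M y y'"
          have sub: "trunc K ` ?F y' \<subseteq> trunc K ` ?F y" using M y'Y a by blast
          have NK: "N \<le> K" unfolding K_def by simp
          have "card (trunc K ` ?F y') = d" using card_image[OF sep_inj[OF N NK]] d[OF y'Y] by simp
          moreover have "card (trunc K ` ?F y) = d" using card_image[OF sep_inj[OF N NK]] d[OF yY] by simp
          moreover have "finite (trunc K ` ?F y)" using d[OF yY] by simp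
          ultimately have eq: "trunc K ` ?F y' = trunc K ` ?F y" using card_subset_eq[OF _ sub] by simp
          have "trunc K x \<in> trunc K ` ?F y" using xX yx by simp
          then obtain x' where x': "x' \<in> X" "\<phi> x' = y'" "trunc K x' = trunc K x" using eq by force
          then have "agree K x x'" by (simp add: agree_trunc)
          then have "agree k x x'" unfolding K_def by (rule agree_mono) simp
          then have "x' \<in> U" using k x'(1) by blast
          then show "y' \<in> \<phi> ` U" using x'(2) by blast
        qed
      qed
    qed
  }
qed


end
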